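(* If the vertex set of a graph $G$ has a partition into bisimplices, then $G$ is well-bicovered.
   Context: All graphs are finite and simple; "subgraph" means induced subgraph. A vertex is simplicial if its neighborhood induces a complete graph. A bisimplex of $G$ is a maximal clique $S$ of $G$ that contains a simplicial vertex $s$ (so $s$ has no neighbor outside $S$) and a second vertex $t\in S$ that has at most one neighbor outside $S$. A graph is well-bicovered if every vertex-inclusion-maximal induced bipartite subgraph has the same order. *)

theory Defs
  imports Main
begin

definition graph :: "'a set \<Rightarrow> ('a \<Rightarrow> 'a \<Rightarrow> bool) \<Rightarrow> bool" where
  "graph V E \<longleftrightarrow> finite V \<and> (\<forall>x y. E x y \<longrightarrow> E y x) \<and> (\<forall>x. \<not> E x x)
     \<and> (\<forall>x y. E x y \<longrightarrow> x \<in> V \<and> y \<in> V)"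

definition nbhd :: "'a set \<Rightarrow> ('a \<Rightarrow> 'a \<Rightarrow> bool) \<Rightarrow> 'a \<Rightarrow> 'a set" where
  "nbhd V E v = {u \<in> V. E v u}"

definition clique :: "'a set \<Rightarrow> ('a \<Rightarrow> 'a \<Rightarrow> bool) \<Rightarrow> 'a set \<Rightarrow> bool" where
  "clique V E S \<longleftrightarrow> S \<subseteq> V \<and> (\<forall>x\<in>S. \<forall>y\<in>S. x \<noteq> y \<longrightarrow> E x y)"

definition maximal_clique :: "'a set \<Rightarrow> ('a \<Rightarrow> 'a \<Rightarrow> bool) \<Rightarrow> 'a set \<Rightarrow> bool" where
  "maximal_clique V E S \<longleftrightarrow> clique V E S \<and> (\<forall>T. clique V E T \<and> S \<subseteq> T \<longrightarrow> T = S)"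

definition simplicial :: "'a set \<Rightarrow> ('a \<Rightarrow> 'a \<Rightarrow> bool) \<Rightarrow> 'a \<Rightarrow> bool" where
  "simplicial V E v \<longleftrightarrow> v \<in> V \<and> clique V E (nbhd V E v)"

definition bisimplex :: "'a set \<Rightarrow> ('a \<Rightarrow> 'a \<Rightarrow> bool) \<Rightarrow> 'a set \<Rightarrow> bool" where
  "bisimplex V E S \<longleftrightarrow> maximal_clique V E S \<and>
     (\<exists>s\<in>S. \<exists>t\<in>S. s \<noteq> t \<and> simplicial V E s \<and> card (nbhd V E t - S) \<le> 1)"

definition independent :: "('a \<Rightarrow> 'a \<Rightarrow> bool) \<Rightarrow> 'a set \<Rightarrow> bool" where
  "independent E A \<longleftrightarrow> (\<forall>x\<in>A. \<forall>y\<in>A. \<not> E x y)"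

definition induces_bipartite :: "('a \<Rightarrow> 'a \<Rightarrow> bool) \<Rightarrow> 'a set \<Rightarrow> bool" where
  "induces_bipartite E B \<longleftrightarrow> (\<exists>X Y. X \<union> Y = B \<and> X \<inter> Y = {} \<and> independent E X \<and> independent E Y)"

definition maximal_bipartite :: "'a set \<Rightarrow> ('a \<Rightarrow> 'a \<Rightarrow> bool) \<Rightarrow> 'a set \<Rightarrow> bool" where
  "maximal_bipartite V E B \<longleftrightarrow> B \<subseteq> V \<and> induces_bipartite E B \<and>
     (\<forall>C. C \<subseteq> V \<and> induces_bipartite E C \<and> B \<subseteq> C \<longrightarrow> C = B)"

definition well_bicovered :: "'a set \<Rightarrow> ('a \<Rightarrow> 'a \<Rightarrow> bool) \<Rightarrow> bool" where
  "well_bicovered V E \<longleftrightarrow> (\<forall>B C. maximal_bipartite V E B \<and> maximal_bipartite V E C \<longrightarrow> card B = card C)"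

definition is_partition :: "'a set \<Rightarrow> 'a set set \<Rightarrow> bool" where
  "is_partition V P \<longleftrightarrow> \<Union>P = V \<and> {} \<notin> P \<and> (\<forall>A\<in>P. \<forall>B\<in>P. A \<noteq> B \<longrightarrow> A \<inter> B = {})"

end

theory Submission
  imports Defs
begin

lemma bip_add:
  assumes "independent E X" "independent E Y" "X \<inter> Y = {}"
    "\<forall>x\<in>X. \<not> E v x \<and> \<not> E x v" "\<not> E v v"
  shows "induces_bipartite E (insert v (X \<union> Y))"
  unfolding induces_bipartite_def
  apply (rule exI[of _ "insert v X"], rule exI[of _ "Y - {v}"])
  using assms unfolding independent_def by auto

lemma card_le1:
  assumes "finite A" "\<forall>a\<in>A. \<forall>b\<in>A. a = b"
  shows "card A \<le> 1"
  using assms by (metis One_nat_def card_le_Suc0_iff_eq)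

lemma clique_le2:
  assumes "clique V E S" "finite V" "induces_bipartite E B"
  shows "card (B \<inter> S) \<le> 2"
proof -
  obtain X Y where XY: "X \<union> Y = B" "X \<inter> Y = {}" "independent E X" "independent E Y"
    using assms(3) unfolding induces_bipartite_def by blast
  have fS: "finite S" using assms(1,2) unfolding clique_def using finite_subset by blast
  have "card (X \<inter> S) \<le> 1"
    apply (rule card_le1) using fS apply simp
    using XY(3) assms(1) unfolding independent_def clique_def by blast
  moreover have "card (Y \<inter> S) \<le> 1"
    apply (rule card_le1) using fS apply simp
    using XY(4) assms(1) unfolding independent_def clique_def by blast
  moreover have e: "B \<inter> S = (X \<inter> S) \<union> (Y \<inter> S)" using XY(1) by blast
  have "card (B \<inter> S) \<le> card (X \<inter> S) + card (Y \<inter> S)" unfolding e by (rule card_Un_le)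
  ultimately show ?thesis by linarith
qed

lemma nbhd_sub:
  assumes "graph V E" "maximal_clique V E S" "s \<in> S" "simplicial V E s"
  shows "nbhd V E s \<subseteq> S"
proof -
  have sym: "\<And>x y. E x y \<Longrightarrow> E y x" using assms(1) unfolding graph_def by blast
  have sV: "s \<in> V" using assms(4) unfolding simplicial_def by blast
  have cl: "clique V E (nbhd V E s)" using assms(4) unfolding simplicial_def by blast
  have "clique V E (insert s (nbhd V E s))"
    using cl sV sym unfolding clique_def nbhd_def by blast
  moreover have "S \<subseteq> insert s (nbhd V E s)"
    using assms(2,3) unfolding maximal_clique_def clique_def nbhd_def by auto
  ultimately have "insert s (nbhd V E s) = S" using assms(2) unfolding maximal_clique_def by blast
  then show ?thesis by blast
qed

lemma main_ge2:
  assumes G: "graph V E" and M: "maximal_bipartite V E B" and BS: "bisimplex V E S"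
  shows "card (B \<inter> S) \<ge> 2"
proof (rule ccontr)
  assume "\<not> card (B \<inter> S) \<ge> 2"
  hence c1: "card (B \<inter> S) \<le> 1" by simp
  have fV: "finite V" and sym: "\<And>x y. E x y \<Longrightarrow> E y x" and irr: "\<And>x. \<not> E x x"
    and inV: "\<And>x y. E x y \<Longrightarrow> x \<in> V \<and> y \<in> V"
    using G unfolding graph_def by blast+
  have mc: "maximal_clique V E S" using BS unfolding bisimplex_def by blast
  obtain s t where st: "s \<in> S" "t \<in> S" "s \<noteq> t" "simplicial V E s" "card (nbhd V E t - S) \<le> 1"
    using BS unfolding bisimplex_def by blast
  have clS: "clique V E S" using mc unfolding maximal_clique_def by blast
  have SV: "S \<subseteq> V" using clS unfolding clique_def by blast
  have fS: "finite S" using SV fV by (rule finite_subset)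
  have clS2: "\<forall>x\<in>S. \<forall>y\<in>S. x \<noteq> y \<longrightarrow> E x y" using clS unfolding clique_def by blast
  have Est: "E t s" using clS2 st(1,2,3) by metis
  have ns: "nbhd V E s \<subseteq> S" using nbhd_sub[OF G mc st(1) st(4)] .
  have BV: "B \<subseteq> V" and bipB: "induces_bipartite E B"
    and maxB: "\<And>C. C \<subseteq> V \<Longrightarrow> induces_bipartite E C \<Longrightarrow> B \<subseteq> C \<Longrightarrow> C = B"
    using M unfolding maximal_bipartite_def by blast+
  obtain X Y where XY: "X \<union> Y = B" "X \<inter> Y = {}" "independent E X" "independent E Y"
    using bipB unfolding induces_bipartite_def by blast
  have one: "\<And>a b. a \<in> B \<inter> S \<Longrightarrow> b \<in> B \<inter> S \<Longrightarrow> a = b"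
  proof -
    fix a b assume ab: "a \<in> B \<inter> S" "b \<in> B \<inter> S"
    have fBS: "finite (B \<inter> S)" using fS by simp
    have "\<forall>a\<in>B \<inter> S. \<forall>b\<in>B \<inter> S. a = b" using card_le_Suc0_iff_eq[OF fBS] c1 by simp
    thus "a = b" using ab by blast
  qed
  have nsE: "\<And>x. E s x \<Longrightarrow> x \<in> S" using ns inV unfolding nbhd_def by blast
  show False
  proof (cases "s \<in> B")
    case False
    have "induces_bipartite E (insert s B)"
    proof (cases "\<forall>x\<in>X. \<not> E s x \<and> \<not> E x s")
      case True
      then show ?thesis using bip_add[OF XY(3) XY(4) XY(2) True irr] XY(1) by simp
    next
      case F: False
      then obtain x where x0: "x \<in> X" "E s x \<or> E x s" by blast
      have x: "x \<in> X" "E s x" using x0 sym by metis+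
      have "\<forall>y\<in>Y. \<not> E s y \<and> \<not> E y s"
      proof (intro ballI)
        fix y assume y: "y \<in> Y"
        show "\<not> E s y \<and> \<not> E y s"
        proof
          show "\<not> E s y"
          proof
            assume "E s y"
            hence "x = y" using one[of x y] x y XY(1) nsE by blast
            thus False using x y XY(2) by blast
          qed
          thus "\<not> E y s" using sym by metis
        qed
      qed
      from bip_add[OF XY(4) XY(3) _ this irr] XY(1,2) show ?thesis by (simp add: Un_commute Int_commute)
    qed
    moreover have "insert s B \<subseteq> V" using BV st(1) SV by blast
    ultimately have "insert s B = B" using maxB by blast
    thus False using False by blast
  next
    case True
    have BSs: "B \<inter> S = {s}" using True st(1) one by blast
    have tB: "t \<notin> B" using BSs st(2,3) by auto
    have sIso: "\<And>x. x \<in> B \<Longrightarrow> \<not> E s x \<and> \<not> E x s"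
    proof -
      fix x assume "x \<in> B"
      have "\<not> E s x"
      proof
        assume "E s x"
        hence "x \<in> S" using nsE by blast
        hence "x = s" using BSs \<open>x \<in> B\<close> by blast
        thus False using \<open>E s x\<close> irr by blast
      qed
      thus "\<not> E s x \<and> \<not> E x s" using sym by metis
    qed
    define X' where "X' = X - {s}"
    define Y' where "Y' = Y - {s}"
    have iX': "independent E X'" "independent E Y'" using XY(3,4) unfolding X'_def Y'_def independent_def by auto
    have B': "B = insert s (X' \<union> Y')" using XY(1) True unfolding X'_def Y'_def by blast
    have X'B: "X' \<subseteq> B" "Y' \<subseteq> B" "s \<notin> X'" "s \<notin> Y'" "X' \<inter> Y' = {}"
      using XY unfolding X'_def Y'_def by auto
    have fN: "finite (nbhd V E t - S)" using fV unfolding nbhd_def by simp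
    have oneN: "\<And>a b. a \<in> nbhd V E t - S \<Longrightarrow> b \<in> nbhd V E t - S \<Longrightarrow> a = b"
    proof -
      fix a b assume ab: "a \<in> nbhd V E t - S" "b \<in> nbhd V E t - S"
      have "\<forall>a\<in>nbhd V E t - S. \<forall>b\<in>nbhd V E t - S. a = b" using card_le_Suc0_iff_eq[OF fN] st(5) by simp
      thus "a = b" using ab by blast
    qed
    have insS: "\<And>A. A \<subseteq> B \<Longrightarrow> independent E A \<Longrightarrow> independent E (insert s A)"
      using sIso irr unfolding independent_def by blast
    have "induces_bipartite E (insert t B)"
    proof (cases "\<forall>x\<in>X'. \<not> E t x \<and> \<not> E x t")
      case T: True
      have "induces_bipartite E (insert t (X' \<union> insert s Y'))"
        apply (rule bip_add[OF iX'(1) insS[OF _ iX'(2)] _ T irr])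
        using X'B by auto
      moreover have "insert t (X' \<union> insert s Y') = insert t B" using B' by blast
      ultimately show ?thesis by simp
    next
      case F: False
      then obtain x where x0: "x \<in> X'" "E t x \<or> E x t" by blast
      have x: "x \<in> X'" "E t x" using x0 sym by metis+
      have "x \<in> B" "x \<noteq> s" using x X'B by blast+
      hence "x \<notin> S" using BSs by blast
      hence xN: "x \<in> nbhd V E t - S" using x inV unfolding nbhd_def by blast
      have T: "\<forall>y\<in>Y'. \<not> E t y \<and> \<not> E y t"
      proof (intro ballI)
        fix y assume y: "y \<in> Y'"
        show "\<not> E t y \<and> \<not> E y t"
        proof
          show "\<not> E t y"
          proof
            assume "E t y"
            have "y \<in> B" "y \<noteq> s" using y X'B by blast+
            hence "y \<notin> S" using BSs by blast
            hence "y \<in> nbhd V E t - S" using \<open>E t y\<close> inV unfolding nbhd_def by blast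
            hence "x = y" using oneN xN by blast
            thus False using x y X'B by blast
          qed
          thus "\<not> E y t" using sym by metis
        qed
      qed
      have "induces_bipartite E (insert t (Y' \<union> insert s X'))"
        apply (rule bip_add[OF iX'(2) insS[OF _ iX'(1)] _ T irr])
        using X'B by auto
      moreover have "insert t (Y' \<union> insert s X') = insert t B" using B' by blast
      ultimately show ?thesis by simp
    qed
    moreover have "insert t B \<subseteq> V" using BV st(2) SV by blast
    ultimately have "insert t B = B" using maxB by blast
    thus False using tB by blast
  qed
qed

lemma card_maxbip:
  assumes G: "graph V E" and P: "is_partition V P" and bs: "\<forall>S\<in>P. bisimplex V E S"
    and M: "maximal_bipartite V E B"
  shows "card B = 2 * card P"
proof -
  have fV: "finite V" using G unfolding graph_def by blast
  have fP: "finite P" using P fV unfolding is_partition_def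
    by (metis Sup_upper finite_UnionD)
  have BV: "B \<subseteq> V" and bipB: "induces_bipartite E B" using M unfolding maximal_bipartite_def by auto
  have each: "\<forall>S\<in>P. card (B \<inter> S) = 2"
  proof
    fix S assume S: "S \<in> P"
    have "clique V E S" using bs S unfolding bisimplex_def maximal_clique_def by blast
    hence "card (B \<inter> S) \<le> 2" using clique_le2 fV bipB by blast
    moreover have "card (B \<inter> S) \<ge> 2" using main_ge2[OF G M] bs S by blast
    ultimately show "card (B \<inter> S) = 2" by simp
  qed
  have "B = (\<Union>S\<in>P. B \<inter> S)" using P BV unfolding is_partition_def by blast
  hence "card B = card (\<Union>S\<in>P. B \<inter> S)" by simp
  also have "\<dots> = (\<Sum>S\<in>P. card (B \<inter> S))"
    apply (rule card_UN_disjoint[OF fP])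
    using fV BV finite_subset apply blast
    using P unfolding is_partition_def by blast
  also have "\<dots> = (\<Sum>S\<in>P. 2)" using each by simp
  finally show ?thesis by simp
qed

theorem mainTheorem17:
  fixes V :: "'a set" and E :: "'a \<Rightarrow> 'a \<Rightarrow> bool" and P :: "'a set set"
  assumes "graph V E"
    and "is_partition V P"
    and "\<forall>S\<in>P. bisimplex V E S"
  shows "well_bicovered V E"
  unfolding well_bicovered_def using card_maxbip[OF assms] by simp

end
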